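(* For every integer $m\geq 5$ there exist a ranking profile $R$ over $m$ candidates and a ranking $\succ\in\mathcal{R}$ such that $R(\succ)=\frac{m}{5}\big/\binom{m}{2}$ and every ranking $\rhd$ chosen by the Squared Kemeny rule for $R$ (i.e., every minimizer of $\sum_{\succ'\in\mathcal{R}}R(\succ')\,\mathit{swap}(\succ',\rhd)^2$, under any tie-breaking) satisfies $u(\succ,\rhd)=0$.
   Context: Let $C=\{x_1,\dots,x_m\}$ be a set of $m$ candidates. A ranking is a strict linear order over $C$; $\mathcal{R}$ denotes the set of all rankings over $C$. A ranking profile is a function $R:\mathcal{R}\to[0,1]$ with $\sum_{\succ\in\mathcal{R}}R(\succ)=1$. For rankings $\succ,\rhd$, the utility is $u(\succ,\rhd)=|\{(x,y)\in C^2: x\succ y \text{ and } x\rhd y\}|$ and the swap distance is $\mathit{swap}(\succ,\rhd)=|\{(x,y)\in C^2: x\succ y\text{ and } y\rhd x\}|=\binom{m}{2}-u(\succ,\rhd)$. The Squared Kemeny rule chooses a ranking $\rhd\in\mathcal{R}$ minimizing $\sum_{\succ\in\mathcal{R}}R(\succ)\,\mathit{swap}(\succ,\rhd)^2$. *)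

theory Defs
  imports Complex_Main
begin

definition cands :: "nat \<Rightarrow> nat set" where
  "cands m = {0..<m}"

definition rankings :: "nat \<Rightarrow> (nat \<times> nat) set set" where
  "rankings m = {r. r \<subseteq> cands m \<times> cands m \<and> strict_linear_order_on (cands m) r}"

definition util :: "(nat \<times> nat) set \<Rightarrow> (nat \<times> nat) set \<Rightarrow> nat" where
  "util r s = card (r \<inter> s)"

text \<open>Swap distance: number of pairs ordered x over y by r and y over x by s.\<close>
definition swap :: "(nat \<times> nat) set \<Rightarrow> (nat \<times> nat) set \<Rightarrow> nat" where
  "swap r s = card {(x, y). (x, y) \<in> r \<and> (y, x) \<in> s}"

definition is_profile :: "nat \<Rightarrow> ((nat \<times> nat) set \<Rightarrow> real) \<Rightarrow> bool" where
  "is_profile m R \<longleftrightarrow> (\<forall>r. R r \<ge> 0 \<and> R r \<le> 1) \<and> (\<forall>r. r \<notin> rankings m \<longrightarrow> R r = 0)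
     \<and> (\<Sum>r\<in>rankings m. R r) = 1"

definition sq_kemeny_cost :: "nat \<Rightarrow> ((nat \<times> nat) set \<Rightarrow> real) \<Rightarrow> (nat \<times> nat) set \<Rightarrow> real" where
  "sq_kemeny_cost m R t = (\<Sum>r\<in>rankings m. R r * (real (swap r t))^2)"

definition sq_kemeny :: "nat \<Rightarrow> ((nat \<times> nat) set \<Rightarrow> real) \<Rightarrow> (nat \<times> nat) set set" where
  "sq_kemeny m R = {t \<in> rankings m. \<forall>t'\<in>rankings m. sq_kemeny_cost m R t \<le> sq_kemeny_cost m R t'}"

end

theory Submission
  imports Defs
begin


definition rr :: "nat \<Rightarrow> (nat \<times> nat) set" where
  "rr m = {(x,y). x < y \<and> y < m}"

definition relof :: "nat \<Rightarrow> (nat \<Rightarrow> int) \<Rightarrow> (nat \<times> nat) set" where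
  "relof m f = {(x,y). x < m \<and> y < m \<and> f x < f y}"

lemma relof_rank:
  assumes "inj_on f {0..<m}"
  shows "relof m f \<in> rankings m"
proof -
  have "total_on (cands m) (relof m f)"
    unfolding total_on_def relof_def cands_def
  proof (intro ballI impI)
    fix x y assume xy: "x \<in> {0..<m}" "y \<in> {0..<m}" "x \<noteq> y"
    then have "f x \<noteq> f y" using assms by (meson inj_onD)
    then show "(x, y) \<in> {(x, y). x < m \<and> y < m \<and> f x < f y} \<or>
          (y, x) \<in> {(x, y). x < m \<and> y < m \<and> f x < f y}" using xy by auto
  qed
  moreover have "trans (relof m f)" unfolding trans_def relof_def by auto
  moreover have "irrefl (relof m f)" unfolding irrefl_on_def relof_def by auto
  moreover have "relof m f \<subseteq> cands m \<times> cands m" unfolding relof_def cands_def by auto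
  ultimately show ?thesis unfolding rankings_def strict_linear_order_on_def by auto
qed

lemma rank_props:
  assumes "s \<in> rankings m"
  shows "s \<subseteq> {0..<m} \<times> {0..<m}" "\<And>x. (x,x) \<notin> s" "\<And>x y z. (x,y) \<in> s \<Longrightarrow> (y,z) \<in> s \<Longrightarrow> (x,z) \<in> s"
    "\<And>x y. x < m \<Longrightarrow> y < m \<Longrightarrow> x \<noteq> y \<Longrightarrow> (x,y) \<in> s \<or> (y,x) \<in> s"
  using assms unfolding rankings_def strict_linear_order_on_def cands_def irrefl_on_def total_on_def trans_def
  by auto

lemma swap_eq:
  assumes s: "s \<in> rankings m" and t: "t \<in> rankings m"
  shows "swap s t = card (rr m \<inter> s - rr m \<inter> t) + card (rr m \<inter> t - rr m \<inter> s)"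
proof -
  note S = rank_props[OF s] and T = rank_props[OF t]
  have fin: "finite (rr m)" unfolding rr_def
    by (rule finite_subset[of _ "{0..<m} \<times> {0..<m}"]) auto
  have eq: "{(x, y). (x, y) \<in> s \<and> (y, x) \<in> t} = (rr m \<inter> s - rr m \<inter> t) \<union> prod.swap ` (rr m \<inter> t - rr m \<inter> s)"
  proof (rule set_eqI, clarify)
    fix x y
    show "((x, y) \<in> {(x, y). (x, y) \<in> s \<and> (y, x) \<in> t}) = ((x, y) \<in> (rr m \<inter> s - rr m \<inter> t) \<union> prod.swap ` (rr m \<inter> t - rr m \<inter> s))"
    proof (cases "x < y")
      case True
      have "(x, y) \<in> s \<and> (y, x) \<in> t \<longleftrightarrow> (x,y) \<in> s \<and> (x,y) \<notin> t"
      proof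
        assume h: "(x, y) \<in> s \<and> (y, x) \<in> t"
        then show "(x,y) \<in> s \<and> (x,y) \<notin> t" using T(2,3) by blast
      next
        assume h: "(x,y) \<in> s \<and> (x,y) \<notin> t"
        then have "x < m" "y < m" using S(1) by auto
        then show "(x, y) \<in> s \<and> (y, x) \<in> t" using h T(4)[of x y] True by auto
      qed
      moreover have "(x,y) \<notin> prod.swap ` (rr m \<inter> t - rr m \<inter> s)" using True unfolding rr_def by auto
      moreover have "(x,y) \<in> rr m" if "(x,y) \<in> s" using that S(1) True unfolding rr_def by auto
      ultimately show ?thesis by auto
    next
      case False
      have "(x, y) \<in> s \<and> (y, x) \<in> t \<longleftrightarrow> (y,x) \<in> t \<and> (y,x) \<notin> s"
      proof
        assume h: "(x, y) \<in> s \<and> (y, x) \<in> t"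
        then show "(y,x) \<in> t \<and> (y,x) \<notin> s" using S(2,3) by blast
      next
        assume h: "(y,x) \<in> t \<and> (y,x) \<notin> s"
        then have "x < m" "y < m" "x \<noteq> y" using T(1,2) by auto
        then show "(x, y) \<in> s \<and> (y, x) \<in> t" using h S(4)[of x y] by auto
      qed
      moreover have "(x,y) \<notin> rr m" using False unfolding rr_def by auto
      moreover have "(x,y) \<in> prod.swap ` (rr m \<inter> t - rr m \<inter> s) \<longleftrightarrow> (y,x) \<in> rr m \<inter> t - rr m \<inter> s"
      proof
        assume "(x,y) \<in> prod.swap ` (rr m \<inter> t - rr m \<inter> s)"
        then obtain e where "e \<in> rr m \<inter> t - rr m \<inter> s" "(x,y) = prod.swap e" by blast
        then show "(y,x) \<in> rr m \<inter> t - rr m \<inter> s" by (cases e) simp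
      next
        assume "(y,x) \<in> rr m \<inter> t - rr m \<inter> s"
        then show "(x,y) \<in> prod.swap ` (rr m \<inter> t - rr m \<inter> s)"
          by (rule rev_image_eqI) simp
      qed
      moreover have "(y,x) \<in> rr m" if "(y,x) \<in> t" using that T(1,2) False unfolding rr_def by (cases "x = y") auto
      ultimately show ?thesis by auto
    qed
  qed
  have d: "(rr m \<inter> s - rr m \<inter> t) \<inter> prod.swap ` (rr m \<inter> t - rr m \<inter> s) = {}"
    unfolding rr_def by auto
  have "card (prod.swap ` (rr m \<inter> t - rr m \<inter> s)) = card (rr m \<inter> t - rr m \<inter> s)"
    by (rule card_image, rule inj_onI, metis swap_swap)
  then show ?thesis unfolding swap_def eq
    by (subst card_Un_disjoint) (use fin d in auto)
qed

definition topR :: "nat \<Rightarrow> nat \<Rightarrow> (nat \<times> nat) set" where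
  "topR m c = relof m (\<lambda>x. if x = c then - int m else - int x)"
definition botR :: "nat \<Rightarrow> nat \<Rightarrow> (nat \<times> nat) set" where
  "botR m c = relof m (\<lambda>x. if x = c then 1 else - int x)"
definition revR :: "nat \<Rightarrow> (nat \<times> nat) set" where
  "revR m = relof m (\<lambda>x. - int x)"

lemma rr_rank: "rr m \<in> rankings m"
proof -
  have "rr m = relof m int" unfolding rr_def relof_def by auto
  then show ?thesis using relof_rank[of int m] by (simp add: inj_on_def)
qed

lemma topR_rank: "topR m c \<in> rankings m"
  unfolding topR_def by (rule relof_rank) (auto simp: inj_on_def split: if_splits)

lemma botR_rank: "botR m c \<in> rankings m"
  unfolding botR_def by (rule relof_rank) (auto simp: inj_on_def split: if_splits)

lemma revR_rank: "revR m \<in> rankings m"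
  unfolding revR_def by (rule relof_rank) (auto simp: inj_on_def split: if_splits)

lemma rr_topR: "c < m \<Longrightarrow> rr m \<inter> topR m c = {e \<in> rr m. fst e = c}"
  unfolding rr_def topR_def relof_def by (auto split: if_splits)

lemma rr_botR: "c < m \<Longrightarrow> rr m \<inter> botR m c = {e \<in> rr m. snd e = c}"
  unfolding rr_def botR_def relof_def by (auto split: if_splits)

lemma rr_revR: "rr m \<inter> revR m = {}"
  unfolding rr_def revR_def relof_def by auto

lemma finite_rr: "finite (rr m)"
  unfolding rr_def by (rule finite_subset[of _ "{0..<m} \<times> {0..<m}"]) auto

lemma card_rr: "card (rr m) = m choose 2"
proof (induction m)
  case 0
  then show ?case unfolding rr_def by simp
next
  case (Suc m)
  have "rr (Suc m) = rr m \<union> (\<lambda>x. (x, m)) ` {..<m}" unfolding rr_def by auto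
  moreover have "rr m \<inter> (\<lambda>x. (x, m)) ` {..<m} = {}" unfolding rr_def by auto
  moreover have "card ((\<lambda>x. (x, m)) ` {..<m}) = m" by (subst card_image) (auto simp: inj_on_def)
  ultimately have "card (rr (Suc m)) = card (rr m) + m"
    using finite_rr[of m] by (simp add: card_Un_disjoint)
  then show ?case using Suc by (simp add: numeral_2_eq_2)
qed

lemma card_fst: "c < m \<Longrightarrow> card {e \<in> rr m. fst e = c} = m - 1 - c"
proof -
  assume c: "c < m"
  have "{e \<in> rr m. fst e = c} = (\<lambda>y. (c, y)) ` {c<..<m}" unfolding rr_def by auto
  then show ?thesis by (simp add: card_image inj_on_def)
qed

lemma card_snd: "c < m \<Longrightarrow> card {e \<in> rr m. snd e = c} = c"
proof -
  assume c: "c < m"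
  have "{e \<in> rr m. snd e = c} = (\<lambda>x. (x, c)) ` {..<c}" unfolding rr_def using c by auto
  then show ?thesis by (simp add: card_image inj_on_def)
qed

lemma swap_real:
  assumes "s \<in> rankings m" "t \<in> rankings m"
  shows "real (swap s t) = real (card (rr m \<inter> s)) + real (card (rr m \<inter> t)) - 2 * real (card (rr m \<inter> s \<inter> t))"
proof -
  have f1: "finite (rr m \<inter> s)" "finite (rr m \<inter> t)" using finite_rr by auto
  have a: "card (rr m \<inter> s - rr m \<inter> t) = card (rr m \<inter> s) - card (rr m \<inter> s \<inter> t)"
    using card_Diff_subset_Int[of "rr m \<inter> s" "rr m \<inter> t"] f1
    by (simp add: Int_ac)
  have b: "card (rr m \<inter> t - rr m \<inter> s) = card (rr m \<inter> t) - card (rr m \<inter> s \<inter> t)"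
    using card_Diff_subset_Int[of "rr m \<inter> t" "rr m \<inter> s"] f1
    by (simp add: Int_ac)
  have c1: "card (rr m \<inter> s \<inter> t) \<le> card (rr m \<inter> s)" using f1 by (intro card_mono) auto
  have c2: "card (rr m \<inter> s \<inter> t) \<le> card (rr m \<inter> t)" using f1 by (intro card_mono) auto
  show ?thesis using swap_eq[OF assms] a b c1 c2 by (simp add: of_nat_diff)
qed

definition rc :: "(nat \<times> nat) set \<Rightarrow> nat \<Rightarrow> nat" where
  "rc T c = card {e \<in> T. fst e = c}"
definition kc :: "(nat \<times> nat) set \<Rightarrow> nat \<Rightarrow> nat" where
  "kc T c = card {e \<in> T. snd e = c}"

lemma regroup_fst:
  assumes "T \<subseteq> rr m"
  shows "(\<Sum>e\<in>T. f (fst e)) = (\<Sum>c<m. real (rc T c) * f c)"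
proof -
  have fT: "finite T" using assms finite_rr finite_subset by blast
  have "fst ` T \<subseteq> {..<m}" using assms unfolding rr_def by auto
  then have "(\<Sum>c<m. \<Sum>e\<in>{x \<in> T. fst x = c}. f (fst e)) = (\<Sum>e\<in>T. f (fst e))"
    using fT by (intro sum.group) auto
  moreover have "(\<Sum>e\<in>{x \<in> T. fst x = c}. f (fst e)) = real (card {x \<in> T. fst x = c}) * f c" for c
  proof -
    have "(\<Sum>e\<in>{x \<in> T. fst x = c}. f (fst e)) = (\<Sum>e\<in>{x \<in> T. fst x = c}. f c)"
      by (rule sum.cong) auto
    then show ?thesis by simp
  qed
  ultimately show ?thesis by (simp add: rc_def)
qed

lemma regroup_snd:
  assumes "T \<subseteq> rr m"
  shows "(\<Sum>e\<in>T. f (snd e)) = (\<Sum>c<m. real (kc T c) * f c)"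
proof -
  have fT: "finite T" using assms finite_rr finite_subset by blast
  have "snd ` T \<subseteq> {..<m}" using assms unfolding rr_def by auto
  then have "(\<Sum>c<m. \<Sum>e\<in>{x \<in> T. snd x = c}. f (snd e)) = (\<Sum>e\<in>T. f (snd e))"
    using fT by (intro sum.group) auto
  moreover have "(\<Sum>e\<in>{x \<in> T. snd x = c}. f (snd e)) = real (card {x \<in> T. snd x = c}) * f c" for c
  proof -
    have "(\<Sum>e\<in>{x \<in> T. snd x = c}. f (snd e)) = (\<Sum>e\<in>{x \<in> T. snd x = c}. f c)"
      by (rule sum.cong) auto
    then show ?thesis by simp
  qed
  ultimately show ?thesis by (simp add: kc_def)
qed

lemma edge_bound:
  assumes t: "t \<in> rankings m" and e: "(x, y) \<in> rr m \<inter> t"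
  shows "real y - real x \<le> real (rc (rr m \<inter> t) x) + real (kc (rr m \<inter> t) y) - 1"
proof -
  define T where "T = rr m \<inter> t"
  note R = rank_props[OF t]
  have xy: "x < y" "y < m" using e unfolding rr_def by auto
  have fT: "finite T" unfolding T_def using finite_rr by auto
  let ?A = "{e \<in> T. fst e = x} - {(x, y)}"
  let ?B = "{e \<in> T. snd e = y} - {(x, y)}"
  have sub: "{x<..<y} \<subseteq> snd ` ?A \<union> fst ` ?B"
  proof
    fix z assume z: "z \<in> {x<..<y}"
    then have z1: "x < z" "z < y" by auto
    have "(x, z) \<in> t \<or> (z, x) \<in> t" using R(4)[of x z] z1 xy by auto
    then have "(x, z) \<in> t \<or> (z, y) \<in> t" using R(3) e by blast
    then have "(x, z) \<in> T \<or> (z, y) \<in> T" unfolding T_def rr_def using z1 xy by auto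
    then show "z \<in> snd ` ?A \<union> fst ` ?B"
    proof
      assume "(x, z) \<in> T"
      then have "(x, z) \<in> ?A" using z1 by auto
      then have "snd (x, z) \<in> snd ` ?A" by (rule imageI)
      then show ?thesis by simp
    next
      assume "(z, y) \<in> T"
      then have "(z, y) \<in> ?B" using z1 by auto
      then have "fst (z, y) \<in> fst ` ?B" by (rule imageI)
      then show ?thesis by simp
    qed
  qed
  have "card {x<..<y} \<le> card (snd ` ?A \<union> fst ` ?B)"
    using fT by (intro card_mono[OF _ sub]) auto
  also have "\<dots> \<le> card (snd ` ?A) + card (fst ` ?B)" by (rule card_Un_le)
  also have "\<dots> \<le> card ?A + card ?B" using fT by (intro add_mono card_image_le) auto
  finally have "y - Suc x \<le> card ?A + card ?B" by simp
  moreover have "card ?A = rc T x - 1" unfolding rc_def using fT e T_def by (subst card_Diff_singleton) auto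
  moreover have "card ?B = kc T y - 1" unfolding kc_def using fT e T_def by (subst card_Diff_singleton) auto
  moreover have "rc T x \<ge> 1" unfolding rc_def using fT e T_def
    by (metis (mono_tags, lifting) One_nat_def Suc_leI card_gt_0_iff empty_iff fst_conv mem_Collect_eq finite_subset subsetI)
  moreover have "kc T y \<ge> 1" unfolding kc_def using fT e T_def
    by (metis (mono_tags, lifting) One_nat_def Suc_leI card_gt_0_iff empty_iff snd_conv mem_Collect_eq finite_subset subsetI)
  ultimately have "y + 1 \<le> x + rc T x + kc T y" using xy by linarith
  then show ?thesis unfolding T_def by linarith
qed



lemma choose2_real: "real (m choose 2) = real m * (real m - 1) / 2"
proof (induction m)
  case 0 then show ?case by simp
next
  case (Suc m)
  have "Suc m choose 2 = m + (m choose 2)" by (simp add: numeral_2_eq_2)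
  then show ?case using Suc by (simp add: field_simps)
qed

definition pp :: "nat \<Rightarrow> real" where "pp m = (real m / 5) / real (m choose 2)"
definition ww :: "nat \<Rightarrow> real" where "ww m = (1 - pp m) / (2 * real m)"

definition Rp :: "nat \<Rightarrow> (nat \<times> nat) set \<Rightarrow> real" where
  "Rp m s = pp m * (if s = rr m then 1 else 0) +
     ww m * (\<Sum>c<m. (if s = topR m c then 1 else 0) + (if s = botR m c then 1 else 0))"

lemma finite_rankings: "finite (rankings m)"
proof -
  have "rankings m \<subseteq> Pow ({0..<m} \<times> {0..<m})" unfolding rankings_def cands_def by auto
  then show ?thesis by (rule finite_subset) auto
qed

lemma ind_sum:
  assumes "a \<in> rankings m"
  shows "(\<Sum>s\<in>rankings m. (if s = a then 1 else 0) * g s) = (g a :: real)"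
proof -
  have "(\<Sum>s\<in>rankings m. (if s = a then 1 else 0) * g s) = (\<Sum>s\<in>rankings m. if s = a then g a else 0)"
    by (rule sum.cong) auto
  also have "\<dots> = g a" using assms finite_rankings by simp
  finally show ?thesis .
qed

lemma sum_Rp:
  "(\<Sum>s\<in>rankings m. Rp m s * g s) = pp m * g (rr m) + ww m * (\<Sum>c<m. g (topR m c) + g (botR m c))"
proof -
  have "(\<Sum>s\<in>rankings m. Rp m s * g s) =
     pp m * (\<Sum>s\<in>rankings m. (if s = rr m then 1 else 0) * g s) +
     ww m * (\<Sum>c<m. (\<Sum>s\<in>rankings m. (if s = topR m c then 1 else 0) * g s) + (\<Sum>s\<in>rankings m. (if s = botR m c then 1 else 0) * g s))"
    unfolding Rp_def
    by (simp add: algebra_simps sum.distrib sum_distrib_left sum_distrib_right sum.swap[of _ "{..<m}"])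
  then show ?thesis using ind_sum rr_rank topR_rank botR_rank by simp
qed


lemma swap_top:
  assumes t: "t \<in> rankings m" and c: "c < m"
  shows "real (swap (topR m c) t) = real (m - 1 - c) + real (card (rr m \<inter> t)) - 2 * real (rc (rr m \<inter> t) c)"
proof -
  have "rr m \<inter> topR m c \<inter> t = {e \<in> rr m \<inter> t. fst e = c}" using rr_topR[OF c] by auto
  then show ?thesis using swap_real[OF topR_rank t] rr_topR[OF c] card_fst[OF c] unfolding rc_def by simp
qed

lemma swap_bot:
  assumes t: "t \<in> rankings m" and c: "c < m"
  shows "real (swap (botR m c) t) = real c + real (card (rr m \<inter> t)) - 2 * real (kc (rr m \<inter> t) c)"
proof -
  have "rr m \<inter> botR m c \<inter> t = {e \<in> rr m \<inter> t. snd e = c}" using rr_botR[OF c] by auto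
  then show ?thesis using swap_real[OF botR_rank t] rr_botR[OF c] card_snd[OF c] unfolding kc_def by simp
qed

lemma swap_rr:
  assumes t: "t \<in> rankings m"
  shows "real (swap (rr m) t) = real (m choose 2) - real (card (rr m \<inter> t))"
  using swap_real[OF rr_rank t] card_rr[of m] by (simp add: Int_assoc)

lemma cost_formula:
  assumes t: "t \<in> rankings m"
  shows "sq_kemeny_cost m (Rp m) t = pp m * (real (m choose 2) - real (card (rr m \<inter> t)))^2 +
    ww m * (\<Sum>c<m. (real (m - 1 - c) + real (card (rr m \<inter> t)) - 2 * real (rc (rr m \<inter> t) c))^2
                   + (real c + real (card (rr m \<inter> t)) - 2 * real (kc (rr m \<inter> t) c))^2)"
  unfolding sq_kemeny_cost_def sum_Rp swap_rr[OF t]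
  using swap_top[OF t] swap_bot[OF t] by simp

lemma key_sums:
  assumes t: "t \<in> rankings m"
  defines "T \<equiv> rr m \<inter> t"
  shows "(\<Sum>c<m. real (rc T c)) = real (card T)" "(\<Sum>c<m. real (kc T c)) = real (card T)"
    "(\<Sum>c<m. real (kc T c) * real c) - (\<Sum>c<m. real (rc T c) * real c)
       \<le> (\<Sum>c<m. real (rc T c) * real (rc T c)) + (\<Sum>c<m. real (kc T c) * real (kc T c)) - real (card T)"
proof -
  have sub: "T \<subseteq> rr m" unfolding T_def by auto
  have fT: "finite T" using sub finite_rr finite_subset by blast
  show "(\<Sum>c<m. real (rc T c)) = real (card T)"
    using regroup_fst[OF sub, of "\<lambda>_. 1"] by simp
  show "(\<Sum>c<m. real (kc T c)) = real (card T)"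
    using regroup_snd[OF sub, of "\<lambda>_. 1"] by simp
  have "(\<Sum>e\<in>T. real (snd e) - real (fst e)) \<le> (\<Sum>e\<in>T. real (rc T (fst e)) + real (kc T (snd e)) - 1)"
  proof (rule sum_mono)
    fix e assume "e \<in> T"
    then show "real (snd e) - real (fst e) \<le> real (rc T (fst e)) + real (kc T (snd e)) - 1"
      using edge_bound[OF t, of "fst e" "snd e"] unfolding T_def by simp
  qed
  then show "(\<Sum>c<m. real (kc T c) * real c) - (\<Sum>c<m. real (rc T c) * real c)
       \<le> (\<Sum>c<m. real (rc T c) * real (rc T c)) + (\<Sum>c<m. real (kc T c) * real (kc T c)) - real (card T)"
    unfolding sum_subtractf sum.distrib
    using regroup_fst[OF sub, of real] regroup_snd[OF sub, of real]
      regroup_fst[OF sub, of "\<lambda>c. real (rc T c)"] regroup_snd[OF sub, of "\<lambda>c. real (kc T c)"]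
    by simp
qed


lemma main_ineq:
  assumes m: "m \<ge> 5" and t: "t \<in> rankings m" and pos: "card (rr m \<inter> t) > 0"
  shows "sq_kemeny_cost m (Rp m) (revR m) < sq_kemeny_cost m (Rp m) t"
proof -
  define T where "T = rr m \<inter> t"
  define d where "d = real (card T)"
  define N where "N = real (m choose 2)"
  define M where "M = real m"
  define r where "r = (\<lambda>c. real (rc T c))"
  define k where "k = (\<lambda>c. real (kc T c))"
  have dpos: "d > 0" using pos unfolding d_def T_def by simp
  have M5: "M \<ge> 5" using m unfolding M_def by simp
  have NM: "N = M * (M - 1) / 2" unfolding N_def M_def by (rule choose2_real)
  have ks: "(\<Sum>c<m. r c) = d" "(\<Sum>c<m. k c) = d"
    "(\<Sum>c<m. k c * real c) - (\<Sum>c<m. r c * real c) \<le> (\<Sum>c<m. r c * r c) + (\<Sum>c<m. k c * k c) - d"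
    using key_sums[OF t] unfolding r_def k_def d_def T_def by auto
  have c1: "sq_kemeny_cost m (Rp m) t = pp m * (N - d)^2 +
    ww m * (\<Sum>c<m. (real (m - 1 - c) + d - 2 * r c)^2 + (real c + d - 2 * k c)^2)"
    using cost_formula[OF t] unfolding N_def d_def r_def k_def T_def .
  have e0: "rr m \<inter> revR m = {}" by (rule rr_revR)
  have c0: "sq_kemeny_cost m (Rp m) (revR m) = pp m * N^2 +
    ww m * (\<Sum>c<m. (real (m - 1 - c))^2 + (real c)^2)"
    using cost_formula[OF revR_rank, of m] unfolding N_def e0 rc_def kc_def by simp
  have pw: "(real (m - 1 - c) + d - 2 * r c)^2 + (real c + d - 2 * k c)^2 =
      ((real (m - 1 - c))^2 + (real c)^2) + (2 * (M - 1) * d - 4 * (M - 1) * r c + 4 * (r c * real c)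
       - 4 * (k c * real c) + 2 * d^2 - 4 * d * r c - 4 * d * k c + 4 * (r c * r c) + 4 * (k c * k c))"
    if "c < m" for c
  proof -
    have ha: "real (m - 1 - c) = M - 1 - real c" using that unfolding M_def by (simp add: of_nat_diff)
    show ?thesis unfolding ha by (simp add: power2_eq_square algebra_simps)
  qed
  have S: "(\<Sum>c<m. (real (m - 1 - c) + d - 2 * r c)^2 + (real c + d - 2 * k c)^2) =
      (\<Sum>c<m. (real (m - 1 - c))^2 + (real c)^2) + (2 * (M - 1) * d * M - 4 * (M - 1) * (\<Sum>c<m. r c)
       + 4 * (\<Sum>c<m. r c * real c) - 4 * (\<Sum>c<m. k c * real c) + 2 * d^2 * M - 4 * d * (\<Sum>c<m. r c)
       - 4 * d * (\<Sum>c<m. k c) + 4 * (\<Sum>c<m. r c * r c) + 4 * (\<Sum>c<m. k c * k c))"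
  proof -
    have "(\<Sum>c<m. (real (m - 1 - c) + d - 2 * r c)^2 + (real c + d - 2 * k c)^2) =
      (\<Sum>c<m. ((real (m - 1 - c))^2 + (real c)^2) + (2 * (M - 1) * d - 4 * (M - 1) * r c + 4 * (r c * real c)
       - 4 * (k c * real c) + 2 * d^2 - 4 * d * r c - 4 * d * k c + 4 * (r c * r c) + 4 * (k c * k c)))"
      by (rule sum.cong[OF refl], rule pw, simp)
    also have "\<dots> = (\<Sum>c<m. (real (m - 1 - c))^2 + (real c)^2) + (\<Sum>c<m. 2 * (M - 1) * d - 4 * (M - 1) * r c + 4 * (r c * real c)
       - 4 * (k c * real c) + 2 * d^2 - 4 * d * r c - 4 * d * k c + 4 * (r c * r c) + 4 * (k c * k c))"
      by (rule sum.distrib)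
    also have "(\<Sum>c<m. 2 * (M - 1) * d - 4 * (M - 1) * r c + 4 * (r c * real c)
       - 4 * (k c * real c) + 2 * d^2 - 4 * d * r c - 4 * d * k c + 4 * (r c * r c) + 4 * (k c * k c)) =
       2 * (M - 1) * d * M - 4 * (M - 1) * (\<Sum>c<m. r c)
       + 4 * (\<Sum>c<m. r c * real c) - 4 * (\<Sum>c<m. k c * real c) + 2 * d^2 * M - 4 * d * (\<Sum>c<m. r c)
       - 4 * d * (\<Sum>c<m. k c) + 4 * (\<Sum>c<m. r c * r c) + 4 * (\<Sum>c<m. k c * k c)"
      by (simp only: sum.distrib sum_subtractf sum_distrib_left[symmetric] sum_constant card_lessThan M_def)
        (simp add: algebra_simps)
    finally show ?thesis .
  qed
  define X where "X = 2 * (M - 1) * d * M - 4 * (M - 1) * (\<Sum>c<m. r c)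
       + 4 * (\<Sum>c<m. r c * real c) - 4 * (\<Sum>c<m. k c * real c) + 2 * d^2 * M - 4 * d * (\<Sum>c<m. r c)
       - 4 * d * (\<Sum>c<m. k c) + 4 * (\<Sum>c<m. r c * r c) + 4 * (\<Sum>c<m. k c * k c)"
  have X: "X \<ge> 2 * d * (M^2 - 3 * M + 4) + 2 * (M - 4) * d^2"
    unfolding X_def ks(1,2) using ks(3) by (simp add: power2_eq_square algebra_simps)
  have diff: "sq_kemeny_cost m (Rp m) t - sq_kemeny_cost m (Rp m) (revR m) = pp m * (d^2 - 2 * N * d) + ww m * X"
    unfolding c1 c0 S X_def by (simp add: power2_eq_square algebra_simps)
  have Npos: "N > 0" unfolding NM using M5 by (intro divide_pos_pos mult_pos_pos) auto
  have pN: "pp m * N = M / 5" unfolding pp_def N_def[symmetric] M_def[symmetric] using Npos by (simp add: field_simps)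
  have h1: "M * (pp m * (M - 1)) = M * (2 / 5)" using pN unfolding NM by (simp add: algebra_simps)
  have M0: "M \<noteq> 0" using M5 by simp
  have h2: "pp m * (M - 1) = 2 / 5" using h1 M0 by (metis mult_cancel_left)
  have h3: "pp m * (M - 1) * 5 = 2" using arg_cong[OF h2, of "\<lambda>x. x * 5"] by simp
  have h4: "pp m * (5 * (M - 1)) = 2" using h3 by (metis mult.assoc mult.commute)
  have p_eq: "pp m = 2 / (5 * (M - 1))" using h4 M5 by (simp add: eq_divide_eq)
  have w_eq: "ww m = (5 * M - 7) / (10 * M * (M - 1))" unfolding ww_def p_eq M_def[symmetric] using M5
    by (simp add: field_simps)
  have wpos: "ww m \<ge> 0" using w_eq M5 by simp
  have ppos: "pp m > 0" using p_eq M5 by simp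
  have poly: "3 * M^3 - 20 * M^2 + 41 * M - 28 \<ge> 0"
  proof -
    have "3 * M^3 - 20 * M^2 + 41 * M - 28 = (M - 5) * (3 * M^2 - 5 * M + 16) + 52"
      by (simp add: power2_eq_square power3_eq_cube algebra_simps)
    moreover have "3 * M^2 - 5 * M + 16 \<ge> 0"
    proof -
      have "M * M \<ge> 5 * M" using mult_right_mono[OF M5, of M] M5 by simp
      then show ?thesis using M5 by (simp add: power2_eq_square)
    qed
    ultimately show ?thesis using M5 mult_nonneg_nonneg[of "M - 5" "3 * M^2 - 5 * M + 16"] by linarith
  qed
  have lin: "ww m * (2 * (M^2 - 3 * M + 4)) \<ge> 2 * (M / 5)"
  proof -
    have "ww m * (2 * (M^2 - 3 * M + 4)) - 2 * (M / 5) = (3 * M^3 - 20 * M^2 + 41 * M - 28) / (5 * M * (M - 1))"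
      unfolding w_eq using M5 by (simp add: field_simps power2_eq_square power3_eq_cube)
    moreover have "(3 * M^3 - 20 * M^2 + 41 * M - 28) / (5 * M * (M - 1)) \<ge> 0" using poly M5 by simp
    ultimately show ?thesis by simp
  qed
  have "ww m * X \<ge> ww m * (2 * d * (M^2 - 3 * M + 4) + 2 * (M - 4) * d^2)"
    using X wpos by (rule mult_left_mono)
  then have A: "ww m * X \<ge> ww m * (2 * d * (M^2 - 3 * M + 4)) + ww m * (2 * (M - 4) * d^2)"
    by (simp only: distrib_left)
  have B: "pp m * (d^2 - 2 * N * d) = pp m * d^2 - 2 * d * (pp m * N)" by (simp add: algebra_simps)
  moreover have "ww m * (2 * d * (M^2 - 3 * M + 4)) \<ge> 2 * d * (M / 5)"
    using mult_right_mono[OF lin, of d] dpos by (simp add: algebra_simps)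
  moreover have "ww m * (2 * (M - 4) * d^2) \<ge> 0" using wpos M5 by simp
  moreover have "pp m * d^2 > 0" using ppos dpos by simp
  ultimately have "pp m * (d^2 - 2 * N * d) + ww m * X > 0"
    using A unfolding B pN by linarith
  then show ?thesis using diff by simp
qed


lemma pp_facts:
  assumes m: "m \<ge> 5"
  shows "pp m > 0" "pp m \<le> 1" "ww m \<ge> 0" "pp m + ww m * (2 * real m) = 1"
proof -
  define M where "M = real m"
  have M5: "M \<ge> 5" using m unfolding M_def by simp
  have pe: "pp m = (M / 5) / (M * (M - 1) / 2)" unfolding pp_def choose2_real M_def ..
  have "M * (M - 1) / 2 > 0" using M5 by (intro divide_pos_pos mult_pos_pos) auto
  then show p0: "pp m > 0" unfolding pe using M5 by simp
  have "M / 5 \<le> M * (M - 1) / 2"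
  proof -
    have "M * 1 \<le> M * (M - 1)" using M5 by (intro mult_left_mono) auto
    then show ?thesis using M5 by linarith
  qed
  then show p1: "pp m \<le> 1" unfolding pe using \<open>M * (M - 1) / 2 > 0\<close> using M5 by (simp add: divide_le_eq_1)
  show "ww m \<ge> 0" unfolding ww_def using p1 m by simp
  show "pp m + ww m * (2 * real m) = 1" unfolding ww_def using m by simp
qed

lemma rr_ne_top: "m \<ge> 5 \<Longrightarrow> rr m \<noteq> topR m c"
proof
  assume m: "m \<ge> 5" and e: "rr m = topR m c"
  have "(1, 2) \<in> rr m" "(3, 4) \<in> rr m" unfolding rr_def using m by auto
  then have "(1, 2) \<in> topR m c" "(3, 4) \<in> topR m c" using e by auto
  then show False unfolding topR_def relof_def by (auto split: if_splits)
qed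

lemma rr_ne_bot: "m \<ge> 5 \<Longrightarrow> rr m \<noteq> botR m c"
proof
  assume m: "m \<ge> 5" and e: "rr m = botR m c"
  have "(1, 2) \<in> rr m" "(3, 4) \<in> rr m" unfolding rr_def using m by auto
  then have "(1, 2) \<in> botR m c" "(3, 4) \<in> botR m c" using e by auto
  then show False unfolding botR_def relof_def by (auto split: if_splits)
qed

theorem mainTheorem1:
  fixes m :: nat
  assumes "m \<ge> 5"
  shows "\<exists>R r. is_profile m R \<and> r \<in> rankings m \<and>
           R r = (real m / 5) / real (m choose 2) \<and>
           (\<forall>t \<in> sq_kemeny m R. util r t = 0)"
proof (intro exI conjI)
  note P = pp_facts[OF assms]
  have ind_le: "(\<Sum>c<m. (if s = topR m c then 1 else 0) + (if s = botR m c then 1 else 0)) \<le> (\<Sum>c<m. (2::real))" for s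
    by (intro sum_mono) auto
  have ind_ge: "(\<Sum>c<m. (if s = topR m c then 1 else 0) + (if s = botR m c then 1 else 0)) \<ge> (0::real)" for s
    by (intro sum_nonneg) auto
  show "is_profile m (Rp m)"
    unfolding is_profile_def
  proof (intro conjI allI impI)
    fix s
    show "Rp m s \<ge> 0" unfolding Rp_def using P ind_ge[of s] by (intro add_nonneg_nonneg mult_nonneg_nonneg) auto
    have "Rp m s \<le> pp m * 1 + ww m * (\<Sum>c<m. (2::real))" unfolding Rp_def
      using P ind_le[of s] by (intro add_mono mult_left_mono) auto
    then show "Rp m s \<le> 1" using P by (simp add: algebra_simps)
  next
    fix s assume "s \<notin> rankings m"
    then have "s \<noteq> rr m" "\<And>c. s \<noteq> topR m c" "\<And>c. s \<noteq> botR m c"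
      using rr_rank topR_rank botR_rank by metis+
    then show "Rp m s = 0" unfolding Rp_def by simp
  next
    show "(\<Sum>r\<in>rankings m. Rp m r) = 1"
      using sum_Rp[of m "\<lambda>_. 1"] P by (simp add: algebra_simps)
  qed
  show "rr m \<in> rankings m" by (rule rr_rank)
  show "Rp m (rr m) = (real m / 5) / real (m choose 2)"
    unfolding Rp_def using rr_ne_top[OF assms] rr_ne_bot[OF assms] by (simp add: pp_def)
  show "\<forall>t \<in> sq_kemeny m (Rp m). util (rr m) t = 0"
  proof
    fix t assume "t \<in> sq_kemeny m (Rp m)"
    then have t: "t \<in> rankings m" and le: "sq_kemeny_cost m (Rp m) t \<le> sq_kemeny_cost m (Rp m) (revR m)"
      unfolding sq_kemeny_def using revR_rank by auto
    show "util (rr m) t = 0"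
    proof (rule ccontr)
      assume "util (rr m) t \<noteq> 0"
      then have "card (rr m \<inter> t) > 0" unfolding util_def by simp
      then show False using main_ineq[OF assms t] le by simp
    qed
  qed
qed

end
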